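(* In the setting of the context, let $\mathcal{K}$ be an arbitrary set of policies and define (with $\inf\emptyset=+\infty$) $\varphi:=\inf\{h(y): y\in M_1\}$, $\varphi_1:=\inf\{h(y):y\in M_1\cap\mathcal{K}\}$, $\varphi_3:=\inf\{h(y): y\in\Pi(M_2\cap\mathcal{K})\}$, $\varphi_4:=\inf\{h(y):y\in M_1\cap\Pi(\mathcal{K})\}$, and, with $Y^*:=\arg\min\{h(y):y\in M_2\cap\mathcal{K}\}$, $\varphi_2:=\inf\{h(z): z\in\Pi(Y^* )\}$. Then every element of $M_1\cap\mathcal{K}$, of $\Pi(M_2\cap\mathcal{K})$, of $M_1\cap\Pi(\mathcal{K})$ and of $\Pi(Y^* )$ belongs to $M_1$ (i.e. is feasible for the problem $\min\{h(y):y\in M_1\}$), and \[ \varphi_1\ge\varphi_3,\qquad \varphi_2\ge \varphi_3\ge\varphi_4\ge\varphi . \]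
   Context: Let $T\ge 2$, $M\ge 1$ and $n_1,\dots,n_T\ge 1$ be integers. Let $\xi=(\xi_1,\dots,\xi_T)$ be a random vector with values in $\mathbb{R}^{MT}$, $\xi_t\in\mathbb{R}^M$, on a probability space $(\Omega,\mathcal{A},\mathbb{P})$; $\xi_{1:t}:=(\xi_1,\dots,\xi_t)$. A policy is a tuple $y=(y_t)_{t=1}^T$ where $y_1\in\mathbb{R}^{n_1}$ is deterministic and, for $t\ge 2$, $y_t:\mathbb{R}^{M(t-1)}\to\mathbb{R}^{n_t}$ is Borel measurable, evaluated at $\xi_{1:t-1}$. For $t=1,\dots,T$, $\tau=1,\dots,t$, $k\in\{1,2,3\}$ let $A^{(k)}_{t,\tau}$, $B^{(k)}_{t,\tau}$ be real matrices and $b^{(k)}_t$ vectors of compatible sizes, with $B^{(3)}_{t,t}=0$; let $h_t\in\mathbb{R}^{n_t}$ and let $\mathcal{P}_t\ge 0$ be nonnegative vectors. The objective is $h(y):=\sum_{t=1}^T\mathbb{E}\big\{\langle h_t,y_t(\xi_{1:t-1})\rangle+\langle\mathcal{P}_t,(\sum_{\tau=1}^tA^{(1)}_{t,\tau}y_\tau(\xi_{1:\tau-1})+\sum_{\tau=1}^tB^{(1)}_{t,\tau}\xi_\tau-b^{(1)}_t)_+\rangle\big\}$ (assumed well defined in $\mathbb{R}\cup\{+\infty\}$), where $(\cdot)_+$ is the componentwise maximum with $0$. Fix $p\in(0,1]$. Define $M_1$ = set of policies $y$ with $\mathbb{P}\big(\sum_{\tau=1}^t A^{(2)}_{t,\tau}y_\tau(\xi_{1:\tau-1})+\sum_{\tau=1}^t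 B^{(2)}_{t,\tau}\xi_\tau\le b^{(2)}_t,\ t=1,\dots,T\big)\ge p$ and $\sum_{\tau=1}^t A^{(3)}_{t,\tau}y_\tau(\xi_{1:\tau-1})+\sum_{\tau=1}^{t-1} B^{(3)}_{t,\tau}\xi_\tau\le b^{(3)}_t$ for $t=1,\dots,T$, $\mathbb{P}$-a.s.; $M_2$ = set of policies $y$ with $\mathbb{P}\big(\forall t:\ \sum_{\tau=1}^t A^{(2)}_{t,\tau}y_\tau(\xi_{1:\tau-1})+\sum_{\tau=1}^t B^{(2)}_{t,\tau}\xi_\tau\le b^{(2)}_t\text{ and }\sum_{\tau=1}^t A^{(3)}_{t,\tau}y_\tau(\xi_{1:\tau-1})+\sum_{\tau=1}^{t-1} B^{(3)}_{t,\tau}\xi_\tau\le b^{(3)}_t\big)\ge p$. Let $X_t(z_{1:t-1},\xi_{1:t-1}):=\{u\in\mathbb{R}^{n_t}:A^{(3)}_{t,t}u\le b^{(3)}_t-\sum_{\tau<t}B^{(3)}_{t,\tau}\xi_\tau-\sum_{\tau<t}A^{(3)}_{t,\tau}z_\tau\}$, assumed nonempty for all arguments, and $\pi_X$ the Euclidean projection onto $X$. The operator $\Pi$ maps a policy $y$ to $z=\Pi(y)$ with $z_1:=\pi_{X_1}(y_1)$ and $z_t(\xi_{1:t-1}):=\pi_{X_t(z_1,z_2(\xi_1),\dots,z_{t-1}(\xi_{1:t-2}),\xi_{1:t-1})}(y_t(\xi_{1:t-1}))$ for all $\xi_{1:t-1}$, $t\ge 2$; $\Pi(y)$ is assumed to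 be a policy. $\Pi(\mathcal{K}):=\{\Pi(y):y\in\mathcal{K}\}$. *)

theory Defs
  imports "HOL-Probability.Probability"
begin

text \<open>Time indices t run over {1..horizon}; constraint groups k over {1,2,3}.
  Vectors are functions nat => real on an explicit index range {..<d};
  matrices are functions nat => nat => real (row i, column j).
  Amat D k t tau : mdim D k t x ndim D tau;  Bmat D k t tau : mdim D k t x xdim D;
  bvec D k t : mdim D k t;  hvec D t : ndim D t;  Pvec D t : mdim D 1 t.\<close>
record msp_data =
  horizon :: nat
  xdim :: nat
  ndim :: "nat \<Rightarrow> nat"
  mdim :: "nat \<Rightarrow> nat \<Rightarrow> nat"
  Amat :: "nat \<Rightarrow> nat \<Rightarrow> nat \<Rightarrow> nat \<Rightarrow> nat \<Rightarrow> real"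
  Bmat :: "nat \<Rightarrow> nat \<Rightarrow> nat \<Rightarrow> nat \<Rightarrow> nat \<Rightarrow> real"
  bvec :: "nat \<Rightarrow> nat \<Rightarrow> nat \<Rightarrow> real"
  hvec :: "nat \<Rightarrow> nat \<Rightarrow> real"
  Pvec :: "nat \<Rightarrow> nat \<Rightarrow> real"

type_synonym hist = "nat \<times> nat \<Rightarrow> real"
type_synonym vec = "nat \<Rightarrow> real"
type_synonym policy = "nat \<Rightarrow> hist \<Rightarrow> vec"

text \<open>Index set of the history xi_{1:t-1}: coordinates (tau, j), 1 <= tau < t, j < M.
  The history space R^{M(t-1)} is the finite product PiM over this index set.\<close>
definition Hidx :: "msp_data \<Rightarrow> nat \<Rightarrow> (nat \<times> nat) set" where
  "Hidx D t = {1..<t} \<times> {..<xdim D}"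

text \<open>A policy: y_t is a Borel measurable map R^{M(t-1)} -> R^{n_t}, t = 1..T
  (for t = 1 the history space is a single point, so y_1 is deterministic).\<close>
definition is_policy :: "msp_data \<Rightarrow> policy \<Rightarrow> bool" where
  "is_policy D y \<longleftrightarrow> (\<forall>t\<in>{1..horizon D}.
     y t \<in> measurable (PiM (Hidx D t) (\<lambda>_. (borel :: real measure)))
                       (PiM {..<ndim D t} (\<lambda>_. (borel :: real measure))))"

text \<open>xi :: omega => tau => j => real, xi omega tau j = j-th component of xi_tau.\<close>
definition histo :: "msp_data \<Rightarrow> ('a \<Rightarrow> nat \<Rightarrow> nat \<Rightarrow> real) \<Rightarrow> nat \<Rightarrow> 'a \<Rightarrow> hist" where
  "histo D \<xi> t \<omega> = restrict (\<lambda>(\<tau>, j). \<xi> \<omega> \<tau> j) (Hidx D t)"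

definition polval :: "msp_data \<Rightarrow> ('a \<Rightarrow> nat \<Rightarrow> nat \<Rightarrow> real) \<Rightarrow> policy \<Rightarrow> nat \<Rightarrow> 'a \<Rightarrow> vec" where
  "polval D \<xi> y t \<omega> = y t (histo D \<xi> t \<omega>)"

definition cons2 :: "msp_data \<Rightarrow> ('a \<Rightarrow> nat \<Rightarrow> nat \<Rightarrow> real) \<Rightarrow> policy \<Rightarrow> 'a \<Rightarrow> bool" where
  "cons2 D \<xi> y \<omega> \<longleftrightarrow> (\<forall>t\<in>{1..horizon D}. \<forall>i<mdim D 2 t.
     (\<Sum>\<tau>\<in>{1..t}. \<Sum>j<ndim D \<tau>. Amat D 2 t \<tau> i j * polval D \<xi> y \<tau> \<omega> j)
     + (\<Sum>\<tau>\<in>{1..t}. \<Sum>j<xdim D. Bmat D 2 t \<tau> i j * \<xi> \<omega> \<tau> j) \<le> bvec D 2 t i)"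

definition cons3 :: "msp_data \<Rightarrow> ('a \<Rightarrow> nat \<Rightarrow> nat \<Rightarrow> real) \<Rightarrow> policy \<Rightarrow> 'a \<Rightarrow> bool" where
  "cons3 D \<xi> y \<omega> \<longleftrightarrow> (\<forall>t\<in>{1..horizon D}. \<forall>i<mdim D 3 t.
     (\<Sum>\<tau>\<in>{1..t}. \<Sum>j<ndim D \<tau>. Amat D 3 t \<tau> i j * polval D \<xi> y \<tau> \<omega> j)
     + (\<Sum>\<tau>\<in>{1..<t}. \<Sum>j<xdim D. Bmat D 3 t \<tau> i j * \<xi> \<omega> \<tau> j) \<le> bvec D 3 t i)"

definition Mset1 :: "msp_data \<Rightarrow> 'a measure \<Rightarrow> ('a \<Rightarrow> nat \<Rightarrow> nat \<Rightarrow> real) \<Rightarrow> real \<Rightarrow> policy set" where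
  "Mset1 D M \<xi> p = {y. is_policy D y
      \<and> measure M {\<omega>\<in>space M. cons2 D \<xi> y \<omega>} \<ge> p
      \<and> (AE \<omega> in M. cons3 D \<xi> y \<omega>)}"

definition Mset2 :: "msp_data \<Rightarrow> 'a measure \<Rightarrow> ('a \<Rightarrow> nat \<Rightarrow> nat \<Rightarrow> real) \<Rightarrow> real \<Rightarrow> policy set" where
  "Mset2 D M \<xi> p = {y. is_policy D y
      \<and> measure M {\<omega>\<in>space M. cons2 D \<xi> y \<omega> \<and> cons3 D \<xi> y \<omega>} \<ge> p}"

definition eexpect :: "'a measure \<Rightarrow> ('a \<Rightarrow> real) \<Rightarrow> ereal" where
  "eexpect M X = enn2ereal (\<integral>\<^sup>+\<omega>. ennreal (X \<omega>) \<partial>M) - enn2ereal (\<integral>\<^sup>+\<omega>. ennreal (- X \<omega>) \<partial>M)"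

definition hobj :: "msp_data \<Rightarrow> 'a measure \<Rightarrow> ('a \<Rightarrow> nat \<Rightarrow> nat \<Rightarrow> real) \<Rightarrow> policy \<Rightarrow> ereal" where
  "hobj D M \<xi> y = (\<Sum>t\<in>{1..horizon D}. eexpect M (\<lambda>\<omega>.
      (\<Sum>j<ndim D t. hvec D t j * polval D \<xi> y t \<omega> j)
      + (\<Sum>i<mdim D 1 t. Pvec D t i * max 0
          ((\<Sum>\<tau>\<in>{1..t}. \<Sum>j<ndim D \<tau>. Amat D 1 t \<tau> i j * polval D \<xi> y \<tau> \<omega> j)
           + (\<Sum>\<tau>\<in>{1..t}. \<Sum>j<xdim D. Bmat D 1 t \<tau> i j * \<xi> \<omega> \<tau> j) - bvec D 1 t i))))"

text \<open>X_t(z_{1:t-1}, xi_{1:t-1}); zz tau is z_tau, g (tau, j) is the j-th component of xi_tau.\<close>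
definition Xset :: "msp_data \<Rightarrow> nat \<Rightarrow> (nat \<Rightarrow> vec) \<Rightarrow> hist \<Rightarrow> vec set" where
  "Xset D t zz g = {u \<in> PiE {..<ndim D t} (\<lambda>_. UNIV). \<forall>i<mdim D 3 t.
      (\<Sum>j<ndim D t. Amat D 3 t t i j * u j)
        \<le> bvec D 3 t i - (\<Sum>\<tau>\<in>{1..<t}. \<Sum>j<xdim D. Bmat D 3 t \<tau> i j * g (\<tau>, j))
                       - (\<Sum>\<tau>\<in>{1..<t}. \<Sum>j<ndim D \<tau>. Amat D 3 t \<tau> i j * zz \<tau> j)}"

definition euclid_proj :: "nat \<Rightarrow> vec set \<Rightarrow> vec \<Rightarrow> vec" where
  "euclid_proj n X v = (THE u. u \<in> X \<and> (\<forall>w\<in>X. sqrt (\<Sum>i<n. (u i - v i)^2) \<le> sqrt (\<Sum>i<n. (w i - v i)^2)))"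

text \<open>Recursive construction of z = Pi(y): Pi_pre D y k holds z_1, ..., z_k.\<close>
primrec Pi_pre :: "msp_data \<Rightarrow> policy \<Rightarrow> nat \<Rightarrow> policy" where
  "Pi_pre D y 0 = (\<lambda>_ _. undefined)"
| "Pi_pre D y (Suc k) = (Pi_pre D y k)(Suc k := (\<lambda>g.
     euclid_proj (ndim D (Suc k))
       (Xset D (Suc k) (\<lambda>\<tau>. Pi_pre D y k \<tau> (restrict g (Hidx D \<tau>))) g)
       (y (Suc k) g)))"

definition Pi_op :: "msp_data \<Rightarrow> policy \<Rightarrow> policy" where
  "Pi_op D y = (\<lambda>t. Pi_pre D y t t)"

definition argmin_set :: "('b \<Rightarrow> ereal) \<Rightarrow> 'b set \<Rightarrow> 'b set" where
  "argmin_set f S = {y \<in> S. \<forall>y'\<in>S. f y \<le> f y'}"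

end

theory Submission
  imports Defs
begin


definition sqd :: "nat \<Rightarrow> vec \<Rightarrow> vec \<Rightarrow> real" where
  "sqd n u v = (\<Sum>i<n. (u i - v i)^2)"

lemma proj_unique:
  assumes X: "X \<subseteq> PiE {..<n} (\<lambda>_. UNIV)"
    and conv: "\<And>u w. u \<in> X \<Longrightarrow> w \<in> X \<Longrightarrow> restrict (\<lambda>i. (u i + w i) / 2) {..<n} \<in> X"
    and u: "u \<in> X" "\<forall>w\<in>X. sqd n u v \<le> sqd n w v"
  shows "euclid_proj n X v = u"
proof -
  have key: "w = u" if w: "w \<in> X" "\<forall>x\<in>X. sqd n w v \<le> sqd n x v" for w
  proof -
    define m where "m = restrict (\<lambda>i. (u i + w i) / 2) {..<n}"
    have mX: "m \<in> X" using conv[OF u(1) w(1)] m_def by simp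
    have eq: "sqd n u v = sqd n w v" using u w by (meson order_antisym)
    have "sqd n m v = (sqd n u v + sqd n w v) / 2 - (\<Sum>i<n. (u i - w i)^2) / 4"
    proof -
      have pt: "((u i + w i)/2 - v i)^2 = ((u i - v i)^2 + (w i - v i)^2)/2 - (u i - w i)^2/4" for i
        by (simp add: power2_eq_square field_simps)
      have "sqd n m v = (\<Sum>i<n. ((u i - v i)^2 + (w i - v i)^2)/2 - (u i - w i)^2/4)"
        unfolding sqd_def m_def using pt by simp
      also have "\<dots> = (sqd n u v + sqd n w v) / 2 - (\<Sum>i<n. (u i - w i)^2) / 4"
        unfolding sqd_def by (simp add: sum_subtractf sum_divide_distrib[symmetric] sum.distrib)
      finally show ?thesis .
    qed
    moreover have "sqd n u v \<le> sqd n m v" using u mX by blast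
    ultimately have "(\<Sum>i<n. (u i - w i)^2) \<le> 0" using eq by simp
    hence "\<forall>i\<in>{..<n}. (u i - w i)^2 = 0"
      using sum_nonneg_eq_0_iff[of "{..<n}" "\<lambda>i. (u i - w i)^2"]
      by (simp add: order_antisym sum_nonneg)
    hence "\<forall>i<n. w i = u i" by simp
    moreover have "w \<in> PiE {..<n} (\<lambda>_. UNIV)" "u \<in> PiE {..<n} (\<lambda>_. UNIV)" using X w u by auto
    ultimately show "w = u" by (metis PiE_ext lessThan_iff)
  qed
  have ex: "u \<in> X \<and> (\<forall>w\<in>X. sqrt (\<Sum>i<n. (u i - v i)^2) \<le> sqrt (\<Sum>i<n. (w i - v i)^2))"
    using u by (simp add: sqd_def)
  show ?thesis unfolding euclid_proj_def
  proof (rule the_equality)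
    show "u \<in> X \<and> (\<forall>w\<in>X. sqrt (\<Sum>i<n. (u i - v i)^2) \<le> sqrt (\<Sum>i<n. (w i - v i)^2))" by (rule ex)
  next
    fix w assume "w \<in> X \<and> (\<forall>x\<in>X. sqrt (\<Sum>i<n. (w i - v i)^2) \<le> sqrt (\<Sum>i<n. (x i - v i)^2))"
    then show "w = u" using key by (simp add: sqd_def)
  qed
qed

lemma sq_bound: assumes "(x::real)^2 \<le> c" shows "\<bar>x\<bar> \<le> c + 1"
proof (cases "\<bar>x\<bar> \<le> 1")
  case True
  have "0 \<le> x^2" by simp
  then show ?thesis using True assms by linarith
next
  case False
  have "1 * \<bar>x\<bar> \<le> \<bar>x\<bar> * \<bar>x\<bar>" using False by (intro mult_right_mono) auto
  hence "\<bar>x\<bar> \<le> \<bar>x\<bar> * \<bar>x\<bar>" by simp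
  also have "\<dots> = x^2" by (simp add: power2_eq_square abs_mult_self_eq)
  finally show ?thesis using assms by linarith
qed

lemma cont_proj: "j < n \<Longrightarrow> continuous_map (product_topology (\<lambda>_. euclideanreal) {..<n}) euclideanreal (\<lambda>u. u j)"
  using continuous_map_product_projection[of j "{..<n}" "\<lambda>_. euclideanreal"] by simp

lemma proj_exists:
  fixes m n :: nat and a :: "nat \<Rightarrow> nat \<Rightarrow> real" and c :: "nat \<Rightarrow> real"
  assumes Xd: "X = {u \<in> PiE {..<n} (\<lambda>_. UNIV). \<forall>i<m. (\<Sum>j<n. a i j * u j) \<le> c i}"
    and ne: "X \<noteq> {}"
  shows "\<exists>u\<in>X. \<forall>w\<in>X. sqd n u v \<le> sqd n w v"
proof -
  define T where "T = product_topology (\<lambda>_. euclideanreal) {..<n}"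
  have topT: "topspace T = PiE {..<n} (\<lambda>_. UNIV)" unfolding T_def by simp
  obtain u0 where u0: "u0 \<in> X" using ne by blast
  define H where "H u = (\<Sum>i<m. max 0 ((\<Sum>j<n. a i j * u j) - c i))" for u :: vec
  define f where "f u = sqd n u v" for u
  have contH: "continuous_map T euclideanreal H"
    unfolding H_def T_def
    by (intro continuous_map_sum finite_lessThan continuous_map_real_max continuous_map_canonical_const
       continuous_map_diff continuous_map_real_mult_left cont_proj) auto
  have contf: "continuous_map T euclideanreal f"
    unfolding f_def sqd_def T_def
    by (intro continuous_map_sum finite_lessThan continuous_map_real_pow continuous_map_canonical_const
       continuous_map_diff cont_proj) auto
  define S where "S = {u \<in> topspace T. H u \<in> {..0}} \<inter> {u \<in> topspace T. f u \<in> {..f u0}}"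
  have clS: "closedin T S" unfolding S_def
    by (intro closedin_Int closedin_continuous_map_preimage[OF contH] closedin_continuous_map_preimage[OF contf]) auto
  have Hle: "H u \<le> 0 \<longleftrightarrow> (\<forall>i<m. (\<Sum>j<n. a i j * u j) \<le> c i)" for u
  proof -
    have "H u \<le> 0 \<longleftrightarrow> (\<forall>i\<in>{..<m}. max 0 ((\<Sum>j<n. a i j * u j) - c i) = 0)"
    proof -
      have "0 \<le> H u" unfolding H_def by (intro sum_nonneg) auto
      hence "H u \<le> 0 \<longleftrightarrow> H u = 0" by linarith
      also have "\<dots> \<longleftrightarrow> (\<forall>i\<in>{..<m}. max 0 ((\<Sum>j<n. a i j * u j) - c i) = 0)"
        unfolding H_def by (intro sum_nonneg_eq_0_iff finite_lessThan) auto
      finally show ?thesis .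
    qed
    also have "\<dots> \<longleftrightarrow> (\<forall>i<m. (\<Sum>j<n. a i j * u j) \<le> c i)"
    proof -
      have e: "max 0 (s - t) = 0 \<longleftrightarrow> s \<le> t" for s t :: real by auto
      show ?thesis by (simp add: e Ball_def)
    qed
    finally show ?thesis .
  qed
  have Seq: "S = {u \<in> X. f u \<le> f u0}" unfolding S_def Xd topT using Hle by auto
  define R where "R = f u0 + 1"
  have SB: "S \<subseteq> PiE {..<n} (\<lambda>i. {v i - R .. v i + R})"
  proof
    fix u assume "u \<in> S"
    hence uX: "u \<in> PiE {..<n} (\<lambda>_. UNIV)" and fu: "f u \<le> f u0" unfolding Seq Xd by auto
    have "v i - R \<le> u i \<and> u i \<le> v i + R" if "i < n" for i
    proof -
      have "(u i - v i)^2 \<le> f u" unfolding f_def sqd_def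
        using that by (intro member_le_sum) auto
      hence "\<bar>u i - v i\<bar> \<le> R" unfolding R_def using fu sq_bound[of "u i - v i" "f u0"] by linarith
      thus ?thesis by (simp add: abs_le_iff)
    qed
    thus "u \<in> PiE {..<n} (\<lambda>i. {v i - R .. v i + R})" using uX by (auto simp: PiE_iff)
  qed
  have cB: "compactin T (PiE {..<n} (\<lambda>i. {v i - R .. v i + R}))"
    unfolding T_def by (simp add: compactin_PiE)
  have cS: "compactin T S"
    using closed_Int_compactin[OF clS cB] SB by (simp add: Int_absorb2)
  have "compactin euclideanreal (f ` S)" by (rule image_compactin[OF cS contf])
  hence "compact (f ` S)" by simp
  moreover have "u0 \<in> S" using u0 unfolding Seq by simp
  ultimately obtain s where s: "s \<in> f ` S" "\<forall>t\<in>f ` S. s \<le> t"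
    using compact_attains_inf[of "f ` S"] by blast
  then obtain u where u: "u \<in> S" "s = f u" by blast
  have "\<forall>w\<in>X. f u \<le> f w"
  proof
    fix w assume w: "w \<in> X"
    show "f u \<le> f w"
    proof (cases "f w \<le> f u0")
      case True thus ?thesis using s u w unfolding Seq by auto
    next
      case False thus ?thesis using u unfolding Seq by auto
    qed
  qed
  thus ?thesis using u unfolding Seq f_def by auto
qed

lemma poly_mid:
  fixes m n :: nat and a :: "nat \<Rightarrow> nat \<Rightarrow> real" and c :: "nat \<Rightarrow> real"
  assumes Xd: "X = {u \<in> PiE {..<n} (\<lambda>_. UNIV). \<forall>i<m. (\<Sum>j<n. a i j * u j) \<le> c i}"
    and u: "u \<in> X" and w: "w \<in> X"
  shows "restrict (\<lambda>i. (u i + w i) / 2) {..<n} \<in> X"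
proof -
  have "(\<Sum>j<n. a i j * restrict (\<lambda>i. (u i + w i) / 2) {..<n} j) \<le> c i" if "i < m" for i
  proof -
    have "(\<Sum>j<n. a i j * restrict (\<lambda>i. (u i + w i) / 2) {..<n} j)
        = ((\<Sum>j<n. a i j * u j) + (\<Sum>j<n. a i j * w j)) / 2"
    proof -
      have "(\<Sum>j<n. a i j * restrict (\<lambda>i. (u i + w i) / 2) {..<n} j) = (\<Sum>j<n. (a i j * u j + a i j * w j) / 2)"
        by (rule sum.cong) (auto simp: distrib_left)
      also have "\<dots> = (\<Sum>j<n. a i j * u j + a i j * w j) / 2" by (rule sum_divide_distrib[symmetric])
      also have "\<dots> = ((\<Sum>j<n. a i j * u j) + (\<Sum>j<n. a i j * w j)) / 2" by (simp only: sum.distrib)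
      finally show ?thesis .
    qed
    also have "\<dots> \<le> c i"
    proof -
      have "(\<Sum>j<n. a i j * u j) \<le> c i" "(\<Sum>j<n. a i j * w j) \<le> c i" using u w that unfolding Xd by auto
      hence "(\<Sum>j<n. a i j * u j) + (\<Sum>j<n. a i j * w j) \<le> c i + c i" by (rule add_mono)
      hence "((\<Sum>j<n. a i j * u j) + (\<Sum>j<n. a i j * w j)) / 2 \<le> (c i + c i) / 2"
        by (rule divide_right_mono) simp
      thus ?thesis by simp
    qed
    finally show ?thesis .
  qed
  thus ?thesis unfolding Xd by auto
qed

lemma poly_proj:
  fixes m n :: nat and a :: "nat \<Rightarrow> nat \<Rightarrow> real" and c :: "nat \<Rightarrow> real"
  assumes Xd: "X = {u \<in> PiE {..<n} (\<lambda>_. UNIV). \<forall>i<m. (\<Sum>j<n. a i j * u j) \<le> c i}"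
  shows "X \<noteq> {} \<Longrightarrow> euclid_proj n X v \<in> X" and "u \<in> X \<Longrightarrow> euclid_proj n X u = u"
proof -
  have sub: "X \<subseteq> PiE {..<n} (\<lambda>_. UNIV)" unfolding Xd by auto
  have mid: "\<And>u w. u \<in> X \<Longrightarrow> w \<in> X \<Longrightarrow> restrict (\<lambda>i. (u i + w i) / 2) {..<n} \<in> X"
    by (rule poly_mid[OF Xd])
  show "euclid_proj n X v \<in> X" if ne: "X \<noteq> {}"
  proof -
    from proj_exists[OF Xd ne] obtain u where u1: "u \<in> X" and u2: "\<forall>w\<in>X. sqd n u v \<le> sqd n w v"
      by blast
    have "euclid_proj n X v = u" by (rule proj_unique[OF sub mid u1 u2])
    thus ?thesis using u1 by simp
  qed
  show "euclid_proj n X u = u" if "u \<in> X"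
    by (rule proj_unique[OF sub mid that]) (auto simp: sqd_def intro!: sum_nonneg)
qed

lemma Xset_poly: "Xset D t zz g = {u \<in> PiE {..<ndim D t} (\<lambda>_. UNIV). \<forall>i<mdim D 3 t.
      (\<Sum>j<ndim D t. Amat D 3 t t i j * u j) \<le> (\<lambda>i. bvec D 3 t i - (\<Sum>\<tau>\<in>{1..<t}. \<Sum>j<xdim D. Bmat D 3 t \<tau> i j * g (\<tau>, j))
                       - (\<Sum>\<tau>\<in>{1..<t}. \<Sum>j<ndim D \<tau>. Amat D 3 t \<tau> i j * zz \<tau> j)) i}"
  unfolding Xset_def by simp

lemma Xset_proj1: "Xset D t zz g \<noteq> {} \<Longrightarrow> euclid_proj (ndim D t) (Xset D t zz g) v \<in> Xset D t zz g"
  by (rule poly_proj(1)[OF Xset_poly])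

lemma Xset_proj2: "u \<in> Xset D t zz g \<Longrightarrow> euclid_proj (ndim D t) (Xset D t zz g) u = u"
  by (rule poly_proj(2)[OF Xset_poly])


lemma Pi_pre_stable: "\<tau> \<le> k \<Longrightarrow> Pi_pre D y k \<tau> = Pi_pre D y \<tau> \<tau>"
  by (induction k) (auto simp: le_Suc_eq)

lemma histo_restrict: "\<tau> \<le> t \<Longrightarrow> restrict (histo D \<xi> t \<omega>) (Hidx D \<tau>) = histo D \<xi> \<tau> \<omega>"
  unfolding histo_def Hidx_def by (auto simp: restrict_def fun_eq_iff)

lemma Xset_cong: "(\<And>\<tau>. \<tau> \<in> {1..<t} \<Longrightarrow> zz \<tau> = zz' \<tau>) \<Longrightarrow> Xset D t zz g = Xset D t zz' g"
proof -
  assume a: "\<And>\<tau>. \<tau> \<in> {1..<t} \<Longrightarrow> zz \<tau> = zz' \<tau>"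
  have e: "(\<Sum>\<tau>\<in>{1..<t}. \<Sum>j<ndim D \<tau>. Amat D 3 t \<tau> i j * zz \<tau> j)
         = (\<Sum>\<tau>\<in>{1..<t}. \<Sum>j<ndim D \<tau>. Amat D 3 t \<tau> i j * zz' \<tau> j)" for i
    by (rule sum.cong) (simp_all add: a)
  show ?thesis by (simp only: Xset_def e)
qed

lemma Pi_op_hist:
  assumes "1 \<le> t"
  shows "Pi_op D y t (histo D \<xi> t \<omega>) = euclid_proj (ndim D t)
     (Xset D t (\<lambda>\<tau>. polval D \<xi> (Pi_op D y) \<tau> \<omega>) (histo D \<xi> t \<omega>)) (polval D \<xi> y t \<omega>)"
proof -
  obtain k where t: "t = Suc k" using assms by (cases t) auto
  have "Pi_op D y t (histo D \<xi> t \<omega>) = euclid_proj (ndim D t)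
     (Xset D t (\<lambda>\<tau>. Pi_pre D y k \<tau> (restrict (histo D \<xi> t \<omega>) (Hidx D \<tau>))) (histo D \<xi> t \<omega>)) (polval D \<xi> y t \<omega>)"
    unfolding t Pi_op_def polval_def Pi_pre.simps(2) fun_upd_same by (rule refl)
  also have "Xset D t (\<lambda>\<tau>. Pi_pre D y k \<tau> (restrict (histo D \<xi> t \<omega>) (Hidx D \<tau>))) (histo D \<xi> t \<omega>)
      = Xset D t (\<lambda>\<tau>. polval D \<xi> (Pi_op D y) \<tau> \<omega>) (histo D \<xi> t \<omega>)"
  proof (rule Xset_cong)
    fix \<tau> assume "\<tau> \<in> {1..<t}"
    hence a: "\<tau> \<le> k" and b: "\<tau> \<le> t" using t by auto
    show "Pi_pre D y k \<tau> (restrict (histo D \<xi> t \<omega>) (Hidx D \<tau>)) = polval D \<xi> (Pi_op D y) \<tau> \<omega>"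
      unfolding Pi_pre_stable[OF a] histo_restrict[OF b] polval_def Pi_op_def by (rule refl)
  qed
  finally show ?thesis .
qed

lemma Xset_mem:
  assumes "u \<in> PiE {..<ndim D t} (\<lambda>_. UNIV)"
  shows "u \<in> Xset D t zz (histo D \<xi> t \<omega>) \<longleftrightarrow> (\<forall>i<mdim D 3 t.
     (\<Sum>j<ndim D t. Amat D 3 t t i j * u j) + (\<Sum>\<tau>\<in>{1..<t}. \<Sum>j<ndim D \<tau>. Amat D 3 t \<tau> i j * zz \<tau> j)
     + (\<Sum>\<tau>\<in>{1..<t}. \<Sum>j<xdim D. Bmat D 3 t \<tau> i j * \<xi> \<omega> \<tau> j) \<le> bvec D 3 t i)"
proof -
  have h: "(\<Sum>\<tau>\<in>{1..<t}. \<Sum>j<xdim D. Bmat D 3 t \<tau> i j * histo D \<xi> t \<omega> (\<tau>, j))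
      = (\<Sum>\<tau>\<in>{1..<t}. \<Sum>j<xdim D. Bmat D 3 t \<tau> i j * \<xi> \<omega> \<tau> j)" for i
    by (intro sum.cong refl) (auto simp: histo_def Hidx_def)
  show ?thesis using assms unfolding Xset_def h by auto
qed

lemma sum_split_last: fixes t :: nat shows "1 \<le> t \<Longrightarrow> (\<Sum>\<tau>\<in>{1..t}. f \<tau>) = (\<Sum>\<tau>\<in>{1..<t}. f \<tau>) + (f t :: real)"
proof -
  assume "1 \<le> t"
  hence "{1..t} = insert t {1..<t}" by auto
  thus ?thesis by (simp add: add.commute)
qed

lemma cons3_iff: "cons3 D \<xi> y \<omega> \<longleftrightarrow> (\<forall>t\<in>{1..horizon D}. \<forall>i<mdim D 3 t.
     (\<Sum>j<ndim D t. Amat D 3 t t i j * polval D \<xi> y t \<omega> j)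
     + (\<Sum>\<tau>\<in>{1..<t}. \<Sum>j<ndim D \<tau>. Amat D 3 t \<tau> i j * polval D \<xi> y \<tau> \<omega> j)
     + (\<Sum>\<tau>\<in>{1..<t}. \<Sum>j<xdim D. Bmat D 3 t \<tau> i j * \<xi> \<omega> \<tau> j) \<le> bvec D 3 t i)"
  unfolding cons3_def
proof (rule ball_cong[OF refl])
  fix t assume "t \<in> {1..horizon D}"
  hence t: "1 \<le> t" by simp
  show "(\<forall>i<mdim D 3 t.
     (\<Sum>\<tau>\<in>{1..t}. \<Sum>j<ndim D \<tau>. Amat D 3 t \<tau> i j * polval D \<xi> y \<tau> \<omega> j)
     + (\<Sum>\<tau>\<in>{1..<t}. \<Sum>j<xdim D. Bmat D 3 t \<tau> i j * \<xi> \<omega> \<tau> j) \<le> bvec D 3 t i) =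
    (\<forall>i<mdim D 3 t.
     (\<Sum>j<ndim D t. Amat D 3 t t i j * polval D \<xi> y t \<omega> j)
     + (\<Sum>\<tau>\<in>{1..<t}. \<Sum>j<ndim D \<tau>. Amat D 3 t \<tau> i j * polval D \<xi> y \<tau> \<omega> j)
     + (\<Sum>\<tau>\<in>{1..<t}. \<Sum>j<xdim D. Bmat D 3 t \<tau> i j * \<xi> \<omega> \<tau> j) \<le> bvec D 3 t i)"
    by (simp only: sum_split_last[OF t] add.commute)
qed

lemma cons3_Pi:
  assumes ne: "\<forall>t\<in>{1..horizon D}. \<forall>zz g. Xset D t zz g \<noteq> {}"
  shows "cons3 D \<xi> (Pi_op D y) \<omega>"
  unfolding cons3_iff
proof (intro ballI allI impI)
  fix t i assume t: "t \<in> {1..horizon D}" and i: "i < mdim D 3 t"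
  let ?X = "Xset D t (\<lambda>\<tau>. polval D \<xi> (Pi_op D y) \<tau> \<omega>) (histo D \<xi> t \<omega>)"
  have "polval D \<xi> (Pi_op D y) t \<omega> = euclid_proj (ndim D t) ?X (polval D \<xi> y t \<omega>)"
    using Pi_op_hist[of t D y \<xi> \<omega>] t by (simp add: polval_def)
  also have "\<dots> \<in> ?X" using ne t by (intro Xset_proj1) auto
  finally have mem: "polval D \<xi> (Pi_op D y) t \<omega> \<in> ?X" .
  hence "polval D \<xi> (Pi_op D y) t \<omega> \<in> PiE {..<ndim D t} (\<lambda>_. UNIV)" unfolding Xset_def by auto
  from mem[unfolded Xset_mem[OF this]] i
  show "(\<Sum>j<ndim D t. Amat D 3 t t i j * polval D \<xi> (Pi_op D y) t \<omega> j)
     + (\<Sum>\<tau>\<in>{1..<t}. \<Sum>j<ndim D \<tau>. Amat D 3 t \<tau> i j * polval D \<xi> (Pi_op D y) \<tau> \<omega> j)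
     + (\<Sum>\<tau>\<in>{1..<t}. \<Sum>j<xdim D. Bmat D 3 t \<tau> i j * \<xi> \<omega> \<tau> j) \<le> bvec D 3 t i" by blast
qed

lemma polval_PiE:
  assumes "is_policy D y" "t \<in> {1..horizon D}"
  shows "polval D \<xi> y t \<omega> \<in> PiE {..<ndim D t} (\<lambda>_. UNIV)"
proof -
  have m: "y t \<in> measurable (PiM (Hidx D t) (\<lambda>_. (borel :: real measure))) (PiM {..<ndim D t} (\<lambda>_. (borel :: real measure)))"
    using assms unfolding is_policy_def by blast
  have "histo D \<xi> t \<omega> \<in> space (PiM (Hidx D t) (\<lambda>_. (borel :: real measure)))"
    unfolding histo_def by (simp add: space_PiM)
  from measurable_space[OF m this] show ?thesis by (simp add: polval_def space_PiM)
qed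

lemma Pi_eq:
  assumes pol: "is_policy D y" and c3: "cons3 D \<xi> y \<omega>"
  shows "t \<in> {1..horizon D} \<Longrightarrow> polval D \<xi> (Pi_op D y) t \<omega> = polval D \<xi> y t \<omega>"
proof (induction t rule: less_induct)
  case (less t)
  let ?X = "Xset D t (\<lambda>\<tau>. polval D \<xi> (Pi_op D y) \<tau> \<omega>) (histo D \<xi> t \<omega>)"
  let ?Y = "Xset D t (\<lambda>\<tau>. polval D \<xi> y \<tau> \<omega>) (histo D \<xi> t \<omega>)"
  have XY: "?X = ?Y" by (rule Xset_cong) (use less in auto)
  have u: "polval D \<xi> y t \<omega> \<in> PiE {..<ndim D t} (\<lambda>_. UNIV)" by (rule polval_PiE[OF pol less.prems])
  have "polval D \<xi> y t \<omega> \<in> ?Y"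
    unfolding Xset_mem[OF u] using c3 less.prems unfolding cons3_iff by blast
  hence "euclid_proj (ndim D t) ?X (polval D \<xi> y t \<omega>) = polval D \<xi> y t \<omega>"
    unfolding XY by (rule Xset_proj2)
  thus ?case using Pi_op_hist[of t D y \<xi> \<omega>] less.prems by (simp add: polval_def)
qed

lemma polval_meas:
  assumes xm: "\<forall>t\<in>{1..horizon D}. \<forall>j<xdim D. (\<lambda>\<omega>. \<xi> \<omega> t j) \<in> borel_measurable M"
    and pol: "is_policy D y" and t: "t \<in> {1..horizon D}" and j: "j < ndim D t"
  shows "(\<lambda>\<omega>. polval D \<xi> y t \<omega> j) \<in> borel_measurable M"
proof -
  have h: "histo D \<xi> t \<in> measurable M (PiM (Hidx D t) (\<lambda>_. (borel :: real measure)))"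
    unfolding histo_def[abs_def]
  proof (rule measurable_restrict)
    fix i assume i: "i \<in> Hidx D t"
    then obtain \<tau> j' where ij: "i = (\<tau>, j')" "\<tau> \<in> {1..<t}" "j' < xdim D" unfolding Hidx_def by auto
    hence "\<tau> \<in> {1..horizon D}" using t by auto
    hence "(\<lambda>\<omega>. \<xi> \<omega> \<tau> j') \<in> borel_measurable M" using xm ij by blast
    thus "(\<lambda>\<omega>. case i of (\<tau>, j) \<Rightarrow> \<xi> \<omega> \<tau> j) \<in> borel_measurable M" using ij by simp
  qed
  have m: "y t \<in> measurable (PiM (Hidx D t) (\<lambda>_. (borel :: real measure))) (PiM {..<ndim D t} (\<lambda>_. (borel :: real measure)))"
    using pol t unfolding is_policy_def by blast
  have c: "(\<lambda>x. x j) \<in> measurable (PiM {..<ndim D t} (\<lambda>_. (borel :: real measure))) borel"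
    using measurable_component_singleton[of j "{..<ndim D t}" "\<lambda>_. (borel :: real measure)"] j by simp
  have "(\<lambda>x. x j) \<circ> (y t \<circ> histo D \<xi> t) \<in> borel_measurable M"
    by (rule measurable_comp[OF measurable_comp[OF h m] c])
  thus ?thesis by (simp add: polval_def comp_def)
qed

lemma polsum_meas:
  assumes xm: "\<forall>t\<in>{1..horizon D}. \<forall>j<xdim D. (\<lambda>\<omega>. \<xi> \<omega> t j) \<in> borel_measurable M"
    and pol: "is_policy D y" and S: "S \<subseteq> {1..horizon D}"
  shows "(\<lambda>\<omega>. \<Sum>\<tau>\<in>S. \<Sum>j<ndim D \<tau>. c \<tau> j * polval D \<xi> y \<tau> \<omega> j) \<in> borel_measurable M"
proof (intro borel_measurable_sum borel_measurable_times borel_measurable_const)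
  fix \<tau> j assume "\<tau> \<in> S" "j \<in> {..<ndim D \<tau>}"
  thus "(\<lambda>\<omega>. polval D \<xi> y \<tau> \<omega> j) \<in> borel_measurable M" using polval_meas[OF xm pol] S by auto
qed

lemma xisum_meas:
  fixes \<xi> :: "'a \<Rightarrow> nat \<Rightarrow> nat \<Rightarrow> real"
  assumes xm: "\<forall>t\<in>{1..horizon D}. \<forall>j<xdim D. (\<lambda>\<omega>. \<xi> \<omega> t j) \<in> borel_measurable M"
    and S: "S \<subseteq> {1..horizon D}"
  shows "(\<lambda>\<omega>. \<Sum>\<tau>\<in>S. \<Sum>j<xdim D. c \<tau> j * \<xi> \<omega> \<tau> j) \<in> borel_measurable M"
proof (intro borel_measurable_sum borel_measurable_times borel_measurable_const)
  fix \<tau> j assume "\<tau> \<in> S" "j \<in> {..<xdim D}"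
  thus "(\<lambda>\<omega>. \<xi> \<omega> \<tau> j) \<in> borel_measurable M" using xm S by auto
qed

lemma cons_pred:
  assumes xm: "\<forall>t\<in>{1..horizon D}. \<forall>j<xdim D. (\<lambda>\<omega>. \<xi> \<omega> t j) \<in> borel_measurable M"
    and pol: "is_policy D y"
  shows "Measurable.pred M (cons2 D \<xi> y)" "Measurable.pred M (cons3 D \<xi> y)"
proof -
  show "Measurable.pred M (cons2 D \<xi> y)"
    unfolding cons2_def
  proof (rule pred_intros_finite(3), simp)
    fix t assume t: "t \<in> {1..horizon D}"
    show "Measurable.pred M (\<lambda>x. \<forall>i<mdim D 2 t.
      (\<Sum>\<tau>\<in>{1..t}. \<Sum>j<ndim D \<tau>. Amat D 2 t \<tau> i j * polval D \<xi> y \<tau> x j)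
     + (\<Sum>\<tau>\<in>{1..t}. \<Sum>j<xdim D. Bmat D 2 t \<tau> i j * \<xi> x \<tau> j) \<le> bvec D 2 t i)"
    proof (rule pred_intros_countable(1), rule pred_intros_imp')
      fix i
      have S: "{1..t} \<subseteq> {1..horizon D}" using t by auto
      show "Measurable.pred M (\<lambda>x.
      (\<Sum>\<tau>\<in>{1..t}. \<Sum>j<ndim D \<tau>. Amat D 2 t \<tau> i j * polval D \<xi> y \<tau> x j)
     + (\<Sum>\<tau>\<in>{1..t}. \<Sum>j<xdim D. Bmat D 2 t \<tau> i j * \<xi> x \<tau> j) \<le> bvec D 2 t i)"
        by (rule pred_le_const[OF borel_measurable_add[OF polsum_meas[OF xm pol S] xisum_meas[OF xm S]]]) simp
    qed
  qed
  show "Measurable.pred M (cons3 D \<xi> y)"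
    unfolding cons3_def
  proof (rule pred_intros_finite(3), simp)
    fix t assume t: "t \<in> {1..horizon D}"
    show "Measurable.pred M (\<lambda>x. \<forall>i<mdim D 3 t.
      (\<Sum>\<tau>\<in>{1..t}. \<Sum>j<ndim D \<tau>. Amat D 3 t \<tau> i j * polval D \<xi> y \<tau> x j)
     + (\<Sum>\<tau>\<in>{1..<t}. \<Sum>j<xdim D. Bmat D 3 t \<tau> i j * \<xi> x \<tau> j) \<le> bvec D 3 t i)"
    proof (rule pred_intros_countable(1), rule pred_intros_imp')
      fix i
      have S: "{1..t} \<subseteq> {1..horizon D}" "{1..<t} \<subseteq> {1..horizon D}" using t by auto
      show "Measurable.pred M (\<lambda>x.
      (\<Sum>\<tau>\<in>{1..t}. \<Sum>j<ndim D \<tau>. Amat D 3 t \<tau> i j * polval D \<xi> y \<tau> x j)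
     + (\<Sum>\<tau>\<in>{1..<t}. \<Sum>j<xdim D. Bmat D 3 t \<tau> i j * \<xi> x \<tau> j) \<le> bvec D 3 t i)"
        by (rule pred_le_const[OF borel_measurable_add[OF polsum_meas[OF xm pol S(1)] xisum_meas[OF xm S(2)]]]) simp
    qed
  qed
qed

lemma Asum_cong:
  "(\<forall>\<tau>\<in>{1..t}. P \<tau> = Q \<tau>) \<Longrightarrow> (\<Sum>\<tau>\<in>{1..t}. \<Sum>j<ndim D \<tau>. c \<tau> j * P \<tau> j) = (\<Sum>\<tau>\<in>{1..t}. \<Sum>j<ndim D \<tau>. c \<tau> j * Q \<tau> j)"
  by (rule sum.cong) auto

lemma cons2_cong:
  assumes "\<forall>t\<in>{1..horizon D}. polval D \<xi> z t \<omega> = polval D \<xi> y t \<omega>"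
  shows "cons2 D \<xi> z \<omega> = cons2 D \<xi> y \<omega>"
  unfolding cons2_def
proof (rule ball_cong[OF refl])
  fix t assume "t \<in> {1..horizon D}"
  hence "\<forall>\<tau>\<in>{1..t}. polval D \<xi> z \<tau> \<omega> = polval D \<xi> y \<tau> \<omega>" using assms by auto
  note e = Asum_cong[where P="\<lambda>\<tau>. polval D \<xi> z \<tau> \<omega>" and Q="\<lambda>\<tau>. polval D \<xi> y \<tau> \<omega>", OF this]
  show "(\<forall>i<mdim D 2 t.
      (\<Sum>\<tau>\<in>{1..t}. \<Sum>j<ndim D \<tau>. Amat D 2 t \<tau> i j * polval D \<xi> z \<tau> \<omega> j)
     + (\<Sum>\<tau>\<in>{1..t}. \<Sum>j<xdim D. Bmat D 2 t \<tau> i j * \<xi> \<omega> \<tau> j) \<le> bvec D 2 t i) =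
     (\<forall>i<mdim D 2 t.
      (\<Sum>\<tau>\<in>{1..t}. \<Sum>j<ndim D \<tau>. Amat D 2 t \<tau> i j * polval D \<xi> y \<tau> \<omega> j)
     + (\<Sum>\<tau>\<in>{1..t}. \<Sum>j<xdim D. Bmat D 2 t \<tau> i j * \<xi> \<omega> \<tau> j) \<le> bvec D 2 t i)"
    by (simp only: e)
qed

lemma hobj_cong:
  assumes "AE \<omega> in M. \<forall>t\<in>{1..horizon D}. polval D \<xi> z t \<omega> = polval D \<xi> y t \<omega>"
  shows "hobj D M \<xi> z = hobj D M \<xi> y"
  unfolding hobj_def
proof (rule sum.cong[OF refl])
  fix t assume t: "t \<in> {1..horizon D}"
  let ?F = "\<lambda>y \<omega>. (\<Sum>j<ndim D t. hvec D t j * polval D \<xi> y t \<omega> j)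
      + (\<Sum>i<mdim D 1 t. Pvec D t i * max 0
          ((\<Sum>\<tau>\<in>{1..t}. \<Sum>j<ndim D \<tau>. Amat D 1 t \<tau> i j * polval D \<xi> y \<tau> \<omega> j)
           + (\<Sum>\<tau>\<in>{1..t}. \<Sum>j<xdim D. Bmat D 1 t \<tau> i j * \<xi> \<omega> \<tau> j) - bvec D 1 t i))"
  have ae: "AE \<omega> in M. ?F z \<omega> = ?F y \<omega>"
    using assms
  proof eventually_elim
    case (elim \<omega>)
    hence a: "\<forall>\<tau>\<in>{1..t}. polval D \<xi> z \<tau> \<omega> = polval D \<xi> y \<tau> \<omega>" using t by auto
    note e = Asum_cong[where P="\<lambda>\<tau>. polval D \<xi> z \<tau> \<omega>" and Q="\<lambda>\<tau>. polval D \<xi> y \<tau> \<omega>", OF a]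
    have e2: "polval D \<xi> z t \<omega> = polval D \<xi> y t \<omega>" using elim t by auto
    show ?case by (simp only: e e2)
  qed
  have "AE \<omega> in M. ennreal (?F z \<omega>) = ennreal (?F y \<omega>)" using ae by eventually_elim simp
  moreover have "AE \<omega> in M. ennreal (- ?F z \<omega>) = ennreal (- ?F y \<omega>)" using ae by eventually_elim simp
  ultimately show "eexpect M (?F z) = eexpect M (?F y)"
    unfolding eexpect_def by (simp add: nn_integral_cong_AE)
qed

theorem lemma2p2:
  fixes D :: msp_data and M :: "'a measure" and \<xi> :: "'a \<Rightarrow> nat \<Rightarrow> nat \<Rightarrow> real"
    and p :: real and K :: "policy set"
  assumes "prob_space M"
    and "horizon D \<ge> 2" and "xdim D \<ge> 1" and "\<forall>t\<in>{1..horizon D}. ndim D t \<ge> 1"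
    and "\<forall>t\<in>{1..horizon D}. \<forall>j<xdim D. (\<lambda>\<omega>. \<xi> \<omega> t j) \<in> borel_measurable M"
    and "\<forall>t\<in>{1..horizon D}. \<forall>i<mdim D 3 t. \<forall>j<xdim D. Bmat D 3 t t i j = 0"
    and "\<forall>t\<in>{1..horizon D}. \<forall>i<mdim D 1 t. Pvec D t i \<ge> 0"
    and "0 < p" and "p \<le> 1"
    and "\<forall>t\<in>{1..horizon D}. \<forall>zz g. Xset D t zz g \<noteq> {}"
    and "\<forall>y. is_policy D y \<longrightarrow> is_policy D (Pi_op D y)"
    and "\<forall>y\<in>K. is_policy D y"
  defines "\<phi> \<equiv> Inf (hobj D M \<xi> ` Mset1 D M \<xi> p)"
    and "\<phi>1 \<equiv> Inf (hobj D M \<xi> ` (Mset1 D M \<xi> p \<inter> K))"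
    and "\<phi>3 \<equiv> Inf (hobj D M \<xi> ` (Pi_op D ` (Mset2 D M \<xi> p \<inter> K)))"
    and "\<phi>4 \<equiv> Inf (hobj D M \<xi> ` (Mset1 D M \<xi> p \<inter> Pi_op D ` K))"
    and "\<phi>2 \<equiv> Inf (hobj D M \<xi> ` (Pi_op D ` argmin_set (hobj D M \<xi>) (Mset2 D M \<xi> p \<inter> K)))"
  shows "Mset1 D M \<xi> p \<inter> K \<subseteq> Mset1 D M \<xi> p
    \<and> Pi_op D ` (Mset2 D M \<xi> p \<inter> K) \<subseteq> Mset1 D M \<xi> p
    \<and> Mset1 D M \<xi> p \<inter> Pi_op D ` K \<subseteq> Mset1 D M \<xi> p
    \<and> Pi_op D ` argmin_set (hobj D M \<xi>) (Mset2 D M \<xi> p \<inter> K) \<subseteq> Mset1 D M \<xi> p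
    \<and> \<phi>1 \<ge> \<phi>3 \<and> \<phi>2 \<ge> \<phi>3 \<and> \<phi>3 \<ge> \<phi>4 \<and> \<phi>4 \<ge> \<phi>"
proof -
  note xm = assms(5) and ne = assms(10) and Ppol = assms(11) and Kpol = assms(12)
  interpret prob_space M by (rule assms(1))
  let ?M1 = "Mset1 D M \<xi> p" and ?M2 = "Mset2 D M \<xi> p"
  have sets2: "{\<omega> \<in> space M. cons2 D \<xi> y \<omega>} \<in> sets M" if "is_policy D y" for y
    using cons_pred(1)[OF xm that] by (simp add: pred_def)
  have sets23: "{\<omega> \<in> space M. cons2 D \<xi> y \<omega> \<and> cons3 D \<xi> y \<omega>} \<in> sets M" if "is_policy D y" for y
    using pred_intros_logic(3)[OF cons_pred(1)[OF xm that] cons_pred(2)[OF xm that]] by (simp add: pred_def)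
  have A: "Pi_op D y \<in> ?M1" if y: "y \<in> ?M2 \<inter> K" for y
  proof -
    let ?z = "Pi_op D y"
    have py: "is_policy D y" using y Kpol by blast
    have pz: "is_policy D ?z" using Ppol py by blast
    have "p \<le> measure M {\<omega> \<in> space M. cons2 D \<xi> y \<omega> \<and> cons3 D \<xi> y \<omega>}"
      using y unfolding Mset2_def by simp
    also have "\<dots> \<le> measure M {\<omega> \<in> space M. cons2 D \<xi> ?z \<omega>}"
    proof (rule finite_measure_mono[OF _ sets2[OF pz]])
      show "{\<omega> \<in> space M. cons2 D \<xi> y \<omega> \<and> cons3 D \<xi> y \<omega>} \<subseteq> {\<omega> \<in> space M. cons2 D \<xi> ?z \<omega>}"
      proof safe
        fix \<omega> assume c2: "cons2 D \<xi> y \<omega>" and c3: "cons3 D \<xi> y \<omega>"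
        have eq: "\<forall>t\<in>{1..horizon D}. polval D \<xi> ?z t \<omega> = polval D \<xi> y t \<omega>"
          using Pi_eq[OF py c3] by blast
        show "cons2 D \<xi> ?z \<omega>" using cons2_cong[OF eq] c2 by simp
      qed
    qed
    finally have m: "p \<le> measure M {\<omega> \<in> space M. cons2 D \<xi> ?z \<omega>}" .
    have ae: "AE \<omega> in M. cons3 D \<xi> ?z \<omega>" by (rule AE_I2) (rule cons3_Pi[OF ne])
    show ?thesis unfolding Mset1_def using pz m ae by (intro CollectI conjI)
  qed
  have B: "y \<in> ?M2 \<and> hobj D M \<xi> (Pi_op D y) = hobj D M \<xi> y" if y: "y \<in> ?M1 \<inter> K" for y
  proof
    have py: "is_policy D y" using y Kpol by blast
    have ae3: "AE \<omega> in M. cons3 D \<xi> y \<omega>" using y unfolding Mset1_def by simp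
    have "p \<le> measure M {\<omega> \<in> space M. cons2 D \<xi> y \<omega>}" using y unfolding Mset1_def by simp
    also have "\<dots> \<le> measure M {\<omega> \<in> space M. cons2 D \<xi> y \<omega> \<and> cons3 D \<xi> y \<omega>}"
      by (rule finite_measure_mono_AE[OF _ sets23[OF py]]) (use ae3 in \<open>eventually_elim, auto\<close>)
    finally show "y \<in> ?M2" using py unfolding Mset2_def by simp
    show "hobj D M \<xi> (Pi_op D y) = hobj D M \<xi> y"
    proof (rule hobj_cong)
      show "AE \<omega> in M. \<forall>t\<in>{1..horizon D}. polval D \<xi> (Pi_op D y) t \<omega> = polval D \<xi> y t \<omega>"
        using ae3 by eventually_elim (simp add: Pi_eq[OF py])
    qed
  qed
  have s2: "Pi_op D ` (?M2 \<inter> K) \<subseteq> ?M1" using A by blast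
  have s4: "Pi_op D ` argmin_set (hobj D M \<xi>) (?M2 \<inter> K) \<subseteq> ?M1"
    using A unfolding argmin_set_def by blast
  have i1: "\<phi>1 \<ge> \<phi>3"
    unfolding \<phi>1_def \<phi>3_def
  proof (rule Inf_greatest)
    fix x assume "x \<in> hobj D M \<xi> ` (?M1 \<inter> K)"
    then obtain y where y: "y \<in> ?M1 \<inter> K" and x: "x = hobj D M \<xi> y" by blast
    have mem: "Pi_op D y \<in> Pi_op D ` (?M2 \<inter> K)" using B[OF y] y by blast
    have "Inf (hobj D M \<xi> ` (Pi_op D ` (?M2 \<inter> K))) \<le> hobj D M \<xi> (Pi_op D y)"
      using imageI[OF mem, of "hobj D M \<xi>"] by (rule complete_lattice_class.Inf_lower)
    thus "Inf (hobj D M \<xi> ` (Pi_op D ` (?M2 \<inter> K))) \<le> x" using B[OF y] x by simp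
  qed
  have i2: "\<phi>2 \<ge> \<phi>3"
    unfolding \<phi>2_def \<phi>3_def
    by (rule Inf_superset_mono) (auto simp: argmin_set_def)
  have i3: "\<phi>3 \<ge> \<phi>4"
    unfolding \<phi>3_def \<phi>4_def
    by (rule Inf_superset_mono) (use s2 in blast)
  have i4: "\<phi>4 \<ge> \<phi>"
    unfolding \<phi>4_def \<phi>_def
    by (rule Inf_superset_mono) blast
  show ?thesis using s2 s4 i1 i2 i3 i4 by blast
qed

end
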